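(* Let $(P_n(x))_{n \ge 0}$ be a splitting sequence of a nice polynomial $P_0(x)$, with binary string $s_0 s_1 \ldots$, and suppose $s_{i-1} s_i s_{i+1} = LLS$ for some $i \in \mathbb{N}$. If $P_i(x)$ and $P_{i+2}(x)$ are both $k$-good for some $k \in \mathbb{N}$, then $P_i(x)$ is $(k+1)$-good.
   Context: $P \equiv Q \pmod{M}$ for $P,Q,M \in \mathbb{Z}[x]$ means $M$ divides $P-Q$ in $\mathbb{Z}[x]$. For $n \in \mathbb{N}_0$, $P \in \mathbb{Z}[x]$ is $n$-good if $P(x^{2^m}) \equiv P(x)^{2^m} \pmod{2^{m+1}}$ for every $m \in \{0,\dots,n\}$. A polynomial is nice if it is irreducible in $\mathbb{Z}[x]$ with leading and constant coefficients in $\{\pm 1\}$. Splitting sequence of an irreducible $P \in \mathbb{Z}[x]$: $(P_n)_{n \ge 0}$ with $P_0 = P$ such that for each $n$: if $P_n$ is irreducible, $P_{n+1}(x) = P_n(x^2)$; if $P_n$ is reducible, then (as $P_{n-1}$ is irreducible and $P_n(x) = P_{n-1}(x^2)$ factors as a product of exactly two irreducibles in $\mathbb{Z}[x]$) $P_{n+1}$ is one of these two factors. Its binary string has $s_n = L$ if $P_n$ is irreducible and $s_n = S$ otherwise. *)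

theory Defs
  imports "HOL-Computational_Algebra.Polynomial_Factorial"
begin

definition poly_cong :: "int poly \<Rightarrow> int poly \<Rightarrow> int poly \<Rightarrow> bool" where
  "poly_cong P Q M \<longleftrightarrow> M dvd (P - Q)"

definition n_good :: "nat \<Rightarrow> int poly \<Rightarrow> bool" where
  "n_good n P \<longleftrightarrow> (\<forall>m\<in>{0..n}.
     poly_cong (pcompose P (monom 1 (2 ^ m))) (P ^ (2 ^ m)) [:2 ^ (m + 1):])"

definition nice :: "int poly \<Rightarrow> bool" where
  "nice P \<longleftrightarrow> irreducible P \<and> lead_coeff P \<in> {1, -1} \<and> coeff P 0 \<in> {1, -1}"

definition splitting_sequence :: "int poly \<Rightarrow> (nat \<Rightarrow> int poly) \<Rightarrow> bool" where
  "splitting_sequence P Ps \<longleftrightarrow> irreducible P \<and> Ps 0 = P \<and>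
     (\<forall>n. (irreducible (Ps n) \<longrightarrow> Ps (Suc n) = pcompose (Ps n) [:0, 0, 1:]) \<and>
          (\<not> irreducible (Ps n) \<longrightarrow>
             (\<exists>Q R. irreducible Q \<and> irreducible R \<and> Ps n = Q * R \<and> Ps (Suc n) \<in> {Q, R})))"

datatype letter = L | S

definition binary_string :: "(nat \<Rightarrow> int poly) \<Rightarrow> nat \<Rightarrow> letter" where
  "binary_string Ps n = (if irreducible (Ps n) then L else S)"

end

theory Submission
  imports Defs
begin


definition X :: "int poly" where "X = [:0,1:]"
definition X2 :: "int poly \<Rightarrow> int poly" where "X2 p = pcompose p [:0,0,1:]"
definition mix :: "int poly \<Rightarrow> int poly \<Rightarrow> int poly" where "mix F G = X2 F + X * X2 G"

lemma X_mult: "X * p = pCons 0 p" by (simp add: X_def)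

lemma coeff_pcompose_monom:
  fixes p :: "int poly"
  assumes "K > 0"
  shows "coeff (pcompose p (monom 1 K)) n = (if K dvd n then coeff p (n div K) else 0)"
  using assms
proof (induction p arbitrary: n)
  case 0 then show ?case by simp
next
  case (pCons a p)
  have "coeff (pcompose (pCons a p) (monom 1 K)) n =
        coeff [:a:] n + coeff (monom 1 K * pcompose p (monom 1 K)) n"
    by (simp add: pcompose_pCons)
  also have "\<dots> = (if K dvd n then coeff (pCons a p) (n div K) else 0)"
  proof (cases "n < K")
    case True
    then show ?thesis using pCons.prems
      by (cases n) (auto simp: coeff_monom_mult coeff_pCons dest: dvd_imp_le)
  next
    case False
    then have n0: "n \<noteq> 0" using pCons.prems by auto
    have "K dvd n \<longleftrightarrow> K dvd (n - K)" using False by (metis dvd_minus_self)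
    moreover have "n div K = Suc ((n - K) div K)"
    proof -
      have "n = (n - K) + K" using False by simp
      then have "n div K = ((n - K) + K) div K" by simp
      also have "\<dots> = Suc ((n - K) div K)" using pCons.prems by (subst div_add_self2) auto
      finally show ?thesis .
    qed
    ultimately show ?thesis using False n0 pCons.IH[OF pCons.prems, of "n - K"]
      by (auto simp: coeff_monom_mult coeff_pCons split: nat.splits)
  qed
  finally show ?case .
qed

lemma monom2: "[:0,0,1:] = (monom 1 2 :: int poly)"
  by (rule poly_eqI) (simp add: coeff_monom coeff_pCons split: nat.splits)

lemma coeff_X2: "coeff (X2 F) n = (if even n then coeff F (n div 2) else 0)"
  unfolding X2_def monom2 by (subst coeff_pcompose_monom) auto

lemma coeff_mix: "coeff (mix F G) n = (if even n then coeff F (n div 2) else coeff G (n div 2))"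
  unfolding mix_def X_mult by (cases n) (auto simp: coeff_X2)

definition ev :: "int poly \<Rightarrow> int poly" where
  "ev p = Poly (map (\<lambda>n. coeff p (2*n)) [0..<Suc (degree p)])"
definition od :: "int poly \<Rightarrow> int poly" where
  "od p = Poly (map (\<lambda>n. coeff p (2*n+1)) [0..<Suc (degree p)])"

lemma coeff_ev: "coeff (ev p) n = coeff p (2*n)"
  unfolding ev_def by (auto simp del: upt_Suc simp: nth_default_def coeff_eq_0)
lemma coeff_od: "coeff (od p) n = coeff p (2*n+1)"
  unfolding od_def by (auto simp del: upt_Suc simp: nth_default_def coeff_eq_0)

lemma mix_ev_od: "mix (ev p) (od p) = p"
  by (rule poly_eqI) (auto simp: coeff_mix coeff_ev coeff_od elim!: evenE oddE)

lemma mix_inj: "mix F G = mix F' G' \<Longrightarrow> F = F' \<and> G = G'"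
proof -
  assume h: "mix F G = mix F' G'"
  have "coeff F n = coeff F' n \<and> coeff G n = coeff G' n" for n
    using arg_cong[OF h, of "\<lambda>p. coeff p (2*n)"] arg_cong[OF h, of "\<lambda>p. coeff p (2*n+1)"]
    by (simp add: coeff_mix)
  then show ?thesis by (auto intro: poly_eqI)
qed

lemma dvd_mix: "[:c:] dvd mix F G \<longleftrightarrow> [:c:] dvd F \<and> [:c:] dvd G"
proof -
  have "(\<forall>n. c dvd coeff (mix F G) n) \<longleftrightarrow> (\<forall>n. c dvd coeff F n) \<and> (\<forall>n. c dvd coeff G n)"
  proof (intro iffI conjI allI)
    fix n assume h: "\<forall>n. c dvd coeff (mix F G) n"
    from h[rule_format, of "2*n"] show "c dvd coeff F n" by (simp add: coeff_mix)
    from h[rule_format, of "2*n+1"] show "c dvd coeff G n" by (simp add: coeff_mix)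
  next
    fix n assume h: "(\<forall>n. c dvd coeff F n) \<and> (\<forall>n. c dvd coeff G n)"
    then show "c dvd coeff (mix F G) n" by (simp add: coeff_mix)
  qed
  then show ?thesis by (simp add: const_poly_dvd_iff)
qed

lemma X2_mult: "X2 (p*q) = X2 p * X2 q" by (simp add: X2_def pcompose_mult)
lemma X2_add: "X2 (p+q) = X2 p + X2 q" by (simp add: X2_def pcompose_add)
lemma X2_diff: "X2 (p-q) = X2 p - X2 q" by (simp add: X2_def pcompose_diff)
lemma X2_uminus: "X2 (-p) = - X2 p" by (simp add: X2_def pcompose_uminus)
lemma X2_X: "X2 X = X * X" by (simp add: X2_def X_def pcompose_pCons)
lemma X2_const: "X2 [:c:] = [:c:]" by (simp add: X2_def)
lemma X2_0: "X2 0 = 0" by (simp add: X2_def)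
lemma X2_1: "X2 1 = 1" by (simp add: X2_def pcompose_1)
lemma X2_num: "X2 (numeral n) = numeral n" by (simp add: X2_def numeral_poly)

lemma mix_mult: "mix F G * mix F' G' = mix (F*F' + X*G*G') (F*G' + G*F')"
  unfolding mix_def X2_add X2_mult X2_X by (simp add: algebra_simps)
lemma mix_add: "mix F G + mix F' G' = mix (F+F') (G+G')"
  unfolding mix_def X2_add by (simp add: algebra_simps)
lemma mix_diff: "mix F G - mix F' G' = mix (F-F') (G-G')"
  unfolding mix_def X2_diff by (simp add: algebra_simps)
lemma mix_X: "X = mix 0 1" by (simp add: mix_def X2_0 X2_1)
lemma mix_X2: "X2 F = mix F 0" by (simp add: mix_def X2_0)
lemma mix_num: "numeral n = mix (numeral n) 0" by (simp add: mix_def X2_num X2_0)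



lemma sq_dvd_general:
  fixes a b t :: "'a::comm_ring_1"
  assumes "t dvd a - b" "2 dvd t"
  shows "2*t dvd a^2 - b^2"
proof -
  obtain e where e: "a - b = t*e" using assms(1) by blast
  obtain s where s: "t = 2*s" using assms(2) by blast
  have a: "a = b + t*e" using e by (simp add: algebra_simps)
  have "a^2 - b^2 = 2*t*(e*b + s*e*e)" unfolding a s by (simp add: algebra_simps power2_eq_square)
  then show ?thesis by simp
qed

lemma const2: "(2::int poly) = [:2:]" by (simp add: numeral_poly)

lemma sq_dvd:
  fixes a b :: "int poly"
  assumes "[:2^j:] dvd a - b" "j \<ge> 1"
  shows "[:2^(j+1):] dvd a^2 - b^2"
proof -
  have "2 dvd ([:2^j:] :: int poly)" unfolding const2 using assms(2)
    by (simp add: dvd_power)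
  from sq_dvd_general[OF assms(1) this] show ?thesis
    by (simp add: const2 ac_simps)
qed

lemma pow_dvd:
  fixes a b :: "int poly"
  assumes "[:2^j:] dvd a - b" "j \<ge> 1"
  shows "[:2^(j+n):] dvd a^(2^n) - b^(2^n)"
proof (induction n)
  case 0 then show ?case using assms by simp
next
  case (Suc n)
  from sq_dvd[OF Suc] assms(2) show ?case
    by (simp add: power_mult[symmetric] ac_simps)
qed

lemma dvd_pcompose: "[:c:] dvd (F::int poly) \<Longrightarrow> [:c:] dvd pcompose F G"
proof -
  assume "[:c:] dvd F"
  then obtain H where "F = [:c:] * H" by blast
  then have "pcompose F G = [:c:] * pcompose H G" by (simp add: pcompose_mult pcompose_smult)
  then show ?thesis by (metis dvd_triv_left)
qed

lemma pcompose_power: "pcompose ((p::int poly) ^ n) q = (pcompose p q) ^ n"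
  by (induction n) (simp_all add: pcompose_mult pcompose_1)

lemma monom_comp: "pcompose (X2 p) (monom 1 K) = pcompose p (monom 1 (2*K))"
proof -
  have "pcompose [:0,0,1:] (monom 1 K) = (monom 1 (2*K) :: int poly)"
    by (simp add: pcompose_pCons mult_monom mult_2)
  then show ?thesis unfolding X2_def by (simp add: pcompose_assoc[symmetric])
qed

lemma dvd_pcompose_inj:
  fixes F :: "int poly"
  assumes "[:c:] dvd pcompose F (monom 1 K)" "K > 0"
  shows "[:c:] dvd F"
proof -
  have a: "\<forall>n. c dvd coeff (pcompose F (monom 1 K)) n" using assms(1) by (simp add: const_poly_dvd_iff)
  have "c dvd coeff F n" for n
    using a[rule_format, of "K*n"] assms(2)
    by (simp add: coeff_pcompose_monom)
  then show ?thesis by (simp add: const_poly_dvd_iff)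
qed

lemma n_goodD: "n_good k P \<Longrightarrow> m \<le> k \<Longrightarrow>
   [:2^(m+1):] dvd pcompose P (monom 1 (2^m)) - P^(2^m)"
  by (auto simp: n_good_def poly_cong_def)

lemma good_char:
  assumes "n_good k Q" "k \<ge> 1"
  shows "[:2^(k+1):] dvd X2 Q - Q^2"
proof -
  define K where "K = (2::nat)^(k-1)"
  have kk: "2^k = 2*K" unfolding K_def using assms(2)
    by (metis Suc_diff_le diff_Suc_1 power_Suc)
  have h1: "[:2^k:] dvd pcompose Q (monom 1 K) - Q^K"
    using n_goodD[OF assms(1), of "k-1"] assms(2) unfolding K_def by simp
  have h2: "[:2^(k+1):] dvd (pcompose Q (monom 1 K))^2 - (Q^K)^2"
    using sq_dvd[OF h1 assms(2)] .
  have h3: "[:2^(k+1):] dvd pcompose Q (monom 1 (2*K)) - Q^(2*K)"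
    using n_goodD[OF assms(1), of k] kk by simp
  have "[:2^(k+1):] dvd (pcompose Q (monom 1 (2*K)) - Q^(2*K)) - ((pcompose Q (monom 1 K))^2 - (Q^K)^2)"
    using h2 h3 by (rule dvd_diff[rotated])
  also have "(pcompose Q (monom 1 (2*K)) - Q^(2*K)) - ((pcompose Q (monom 1 K))^2 - (Q^K)^2)
     = pcompose (X2 Q - Q^2) (monom 1 K)"
    by (simp add: pcompose_diff monom_comp pcompose_power power_mult[symmetric] mult.commute)
  finally show ?thesis
    by (rule dvd_pcompose_inj) (simp add: K_def)
qed

lemma good_step:
  assumes "n_good k A" "[:2^(k+2):] dvd X2 A - A^2"
  shows "n_good (k+1) A"
proof -
  have "[:2^(k+2):] dvd pcompose (X2 A - A^2) (monom 1 (2^k))"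
    using assms(2) by (rule dvd_pcompose)
  then have h1: "[:2^(k+2):] dvd pcompose A (monom 1 (2^(k+1))) - (pcompose A (monom 1 (2^k)))^2"
    by (simp add: pcompose_diff monom_comp pcompose_power)
  have h2: "[:2^(k+2):] dvd (pcompose A (monom 1 (2^k)))^2 - (A^(2^k))^2"
    using sq_dvd[OF n_goodD[OF assms(1), of k]] by simp
  have "[:2^(k+2):] dvd pcompose A (monom 1 (2^(k+1))) - A^(2^(k+1))"
    using dvd_add[OF h1 h2] by (simp add: power_mult[symmetric] mult.commute)
  then show ?thesis using assms(1)
    unfolding n_good_def poly_cong_def
    by (auto simp: le_Suc_eq)
qed



lemma neg_mix: "pcompose (mix F G) [:0,-1:] = mix F (-G)"
proof -
  have 1: "pcompose [:0,0,1:] [:0,-1:] = ([:0,0,1:] :: int poly)"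
    by (simp add: pcompose_pCons)
  have 2: "pcompose (X2 F) [:0,-1:] = X2 F" for F
    unfolding X2_def by (simp add: pcompose_assoc[symmetric] 1)
  show ?thesis unfolding mix_def
    by (simp add: pcompose_add pcompose_mult 2 X2_uminus pcompose_pCons X_def)
qed


lemma two_times_dvd: "[:c:] dvd (F::int poly) \<Longrightarrow> [:2*c:] dvd 2*F"
proof -
  assume "[:c:] dvd F"
  then have "[:2:] * [:c:] dvd [:2:] * F" by (rule mult_dvd_mono[OF dvd_refl])
  then show ?thesis by (simp add: const2 mult.commute)
qed

lemma pow_le_dvd: "i \<le> j \<Longrightarrow> [:(2::int)^j:] dvd F \<Longrightarrow> [:2^i:] dvd F"
  by (erule dvd_trans[rotated]) (simp add: le_imp_power_dvd)

lemma core_alg: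
  fixes A B Q :: "int poly"
  assumes A_even: "A = X2 B"
    and AQ: "X2 A = Q * pcompose Q [:0,-1:]"
    and gQ: "[:2^(k+1):] dvd X2 Q - Q^2" and k1: "k \<ge> 1"
  shows "[:2^(k+2):] dvd X2 A - A^2"
proof -
  define E where "E = ev Q"
  define Od where "Od = od Q"
  define e0 where "e0 = ev E"
  define e1 where "e1 = od E"
  define o0 where "o0 = ev Od"
  define o1 where "o1 = od Od"
  have hQ: "Q = mix E Od" unfolding E_def Od_def by (simp add: mix_ev_od)
  have hE: "E = mix e0 e1" unfolding e0_def e1_def by (simp add: mix_ev_od)
  have hO: "Od = mix o0 o1" unfolding o0_def o1_def by (simp add: mix_ev_od)
  have "mix A 0 = mix E Od * mix E (-Od)" using AQ hQ by (simp add: mix_X2 neg_mix)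
  also have "\<dots> = mix (E*E - X*Od*Od) 0" by (simp add: mix_mult)
  finally have hA: "A = E*E - X*Od*Od" using mix_inj by blast
  have "mix B 0 = E*E - X*Od*Od" using A_even hA by (simp add: mix_X2)
  also have "\<dots> = mix e0 e1 * mix e0 e1 - mix 0 1 * mix o0 o1 * mix o0 o1"
    using hE hO mix_X by simp
  also have "\<dots> = mix (e0*e0 + X*e1*e1 - X*(2*o0*o1)) (2*e0*e1 - (o0*o0 + X*o1*o1))"
    by (simp only: mix_mult mix_diff) (rule arg_cong2[where f=mix]; simp add: algebra_simps)
  finally have "0 = 2*e0*e1 - (o0*o0 + X*o1*o1)" using mix_inj by blast
  then have ev_rel: "2*e0*e1 = o0*o0 + X*o1*o1" by (simp add: algebra_simps)
  define S where "S = o0*o0 + X*o1*o1"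
  have "X2 Q - Q^2 = mix (Q - (E*E + X*Od*Od)) (0 - (E*Od + Od*E))"
    using hQ by (simp add: mix_X2 power2_eq_square mix_mult mix_diff)
  with gQ have d1: "[:2^(k+1):] dvd Q - (E*E + X*Od*Od)" by (simp add: dvd_mix)
  have EE: "E*E = mix e0 e1 * mix e0 e1" using hE by simp
  have OO: "X*Od*Od = mix 0 1 * mix o0 o1 * mix o0 o1" using hO mix_X by simp
  have "Q - (E*E + X*Od*Od) = mix E Od - (mix e0 e1 * mix e0 e1 + mix 0 1 * mix o0 o1 * mix o0 o1)" 
    (is "_ = ?r")
    using hQ EE OO by simp
  also have "?r = mix (E - (e0*e0 + X*e1*e1 + X*(2*o0*o1))) (Od - (2*e0*e1 + (o0*o0 + X*o1*o1)))"
    by (simp only: mix_mult mix_diff mix_add) (rule arg_cong2[where f=mix]; simp add: algebra_simps)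
  finally have "[:2^(k+1):] dvd Od - (2*e0*e1 + S)"
    using d1 S_def by (simp add: dvd_mix)
  then have hS: "[:2^(k+1):] dvd Od - 2*S" using ev_rel S_def by (simp add: algebra_simps)
  have dO: "[:2^j:] dvd Od" if "j \<le> k+1" for j
    using that
  proof (induction j)
    case 0 then show ?case by (simp add: const_poly_dvd_iff)
  next
    case (Suc j)
    then have IH: "[:2^j:] dvd Od" by simp
    then have "[:2^j:] dvd o0 \<and> [:2^j:] dvd o1" using hO dvd_mix by metis
    then have "[:2^j:] dvd S" unfolding S_def by simp
    then have t1: "[:2^(Suc j):] dvd 2*S" by (simp add: two_times_dvd)
    have t2: "[:2^(Suc j):] dvd Od - 2*S" using pow_le_dvd[OF Suc.prems hS] .
    have "[:2^(Suc j):] dvd (Od - 2*S) + 2*S" by (rule dvd_add[OF t2 t1])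
    then show ?case by simp
  qed
  have dOk: "[:2^(k+1):] dvd Od" by (rule dO) simp
  have "X2 A = mix E Od * mix E (-Od)" using AQ hQ by (simp add: neg_mix)
  then have "Q*Q - X2 A = mix E Od * (mix E Od - mix E (-Od))" using hQ by (simp add: algebra_simps)
  also have "\<dots> = mix E Od * mix 0 (2*Od)" by (simp add: mix_diff)
  finally have i1: "[:2^(k+2):] dvd Q*Q - X2 A"
    using two_times_dvd[OF dOk] by (simp add: dvd_mix)
  have eqAQ: "A - Q = - (Q - (E*E + X*Od*Od)) - X*(2*Od)*Od" using hA by (simp add: algebra_simps)
  have t3: "[:2^(k+1):] dvd X*(2*Od)*Od" using dOk by simp
  have "[:2^(k+1):] dvd - (Q - (E*E + X*Od*Od)) - X*(2*Od)*Od"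
    by (rule dvd_diff[OF _ t3]) (simp only: dvd_minus_iff d1)
  then have "[:2^(k+1):] dvd A - Q" by (simp only: eqAQ)
  from sq_dvd[OF this] have i2: "[:2^(k+2):] dvd A^2 - Q^2" by simp
  have eqF: "X2 A - A^2 = - (Q*Q - X2 A) - (A^2 - Q^2)" by (simp add: power2_eq_square)
  have "[:2^(k+2):] dvd - (Q*Q - X2 A) - (A^2 - Q^2)"
    by (rule dvd_diff[OF _ i2]) (simp only: dvd_minus_iff i1)
  then show ?thesis by (simp only: eqF)
qed



definition N :: "int poly \<Rightarrow> int poly" where "N p = pcompose p [:0,-1:]"

lemma N_N: "N (N p) = p"
proof -
  have "pcompose [:0,-1:] [:0,-1:] = ([:0,1:] :: int poly)" by (simp add: pcompose_pCons)
  then show ?thesis unfolding N_def by (simp add: pcompose_assoc[symmetric])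
qed
lemma N_mult: "N (p*q) = N p * N q" by (simp add: N_def pcompose_mult)
lemma N_1: "N 1 = 1" by (simp add: N_def pcompose_1)
lemma N_0: "N 0 = 0" by (simp add: N_def)

lemma unit_pcompose: "is_unit (u::int poly) \<Longrightarrow> is_unit (pcompose u q)"
proof -
  assume "is_unit u"
  then obtain v where "1 = u * v" by (auto elim: dvdE)
  then have "1 = pcompose u q * pcompose v q" by (metis pcompose_1 pcompose_mult)
  then show ?thesis by (metis dvd_triv_left)
qed

lemma N_unit: "is_unit (N u) \<longleftrightarrow> is_unit u"
  using unit_pcompose[of u "[:0,-1:]"] unit_pcompose[of "N u" "[:0,-1:]"] N_N
  unfolding N_def by metis

lemma N_irred: "irreducible Q \<Longrightarrow> irreducible (N Q)"
proof (rule irreducibleI)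
  assume Q: "irreducible Q"
  show "N Q \<noteq> 0" using Q N_N N_0 by (metis not_irreducible_zero)
  show "\<not> is_unit (N Q)" using Q N_unit irreducible_not_unit by blast
  fix a b assume "N Q = a * b"
  then have "Q = N a * N b" using N_N N_mult by metis
  then have "is_unit (N a) \<or> is_unit (N b)" using Q irreducibleD by blast
  then show "is_unit a \<or> is_unit b" using N_unit by blast
qed

lemma N_mix: "N (mix F G) = mix F (-G)" by (simp add: N_def neg_mix)
lemma N_X2: "N (X2 F) = X2 F" using N_mix[of F 0] by (simp add: mix_X2)

lemma coeff0_N: "coeff (N p) 0 = coeff p 0"
  by (simp add: N_def poly_0_coeff_0[symmetric] poly_pcompose)
lemma coeff0_X2: "coeff (X2 p) 0 = coeff p 0"
  by (simp add: coeff_X2)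

lemma unit_const: "is_unit (u::int poly) \<Longrightarrow> u = 1 \<or> u = -1"
proof -
  assume "is_unit u"
  then obtain c where "u = [:c:]" "c dvd 1" using is_unit_poly_iff by blast
  then have "u = [:1:] \<or> u = [:-1:]" by auto
  then show ?thesis by (auto simp: one_pCons)
qed

lemma split_case:
  fixes A Q R :: "int poly"
  assumes irrA: "irreducible A" and AQR: "X2 A = Q * R"
    and irrQ: "irreducible Q" and irrR: "irreducible R"
    and c0: "coeff A 0 \<in> {1,-1}" and g1: "[:4:] dvd X2 A - A^2"
  shows "R = N Q"
proof -
  have "N Q * N R = Q * R" using AQR N_X2[of A] N_mult[of Q R] by simp
  then have "N Q dvd Q * R" by (metis dvd_triv_left)
  moreover have "prime_elem (N Q)" using N_irred[OF irrQ] by (simp add: prime_elem_iff_irreducible)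
  ultimately have disj: "N Q dvd Q \<or> N Q dvd R" by (simp add: prime_elem_dvd_mult_iff)
  have nQu: "\<not> is_unit (N Q)" using N_irred[OF irrQ] irreducible_not_unit by blast
  have cA: "coeff A 0 = coeff Q 0 * coeff R 0" using arg_cong[OF AQR, of "\<lambda>p. coeff p 0"] by (simp add: coeff0_X2 coeff_mult_0)
  from disj show ?thesis
  proof (elim disjE)
    assume "N Q dvd Q"
    then obtain u where u: "Q = N Q * u" by blast
    then have "is_unit u" using irreducibleD[OF irrQ u] nQu by blast
    then have "u = 1 \<or> u = -1" by (rule unit_const)
    then show ?thesis
    proof
      assume "u = -1"
      then have "Q = - N Q" using u by simp
      then have "coeff Q 0 = - coeff Q 0" using coeff0_N[of Q] by (metis coeff_minus)
      then have "coeff A 0 = 0" using cA by simp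
      then show ?thesis using c0 by simp
    next
      assume "u = 1"
      then have QN: "N Q = Q" using u by simp
      have "Q \<noteq> 0" using irrQ by auto
      have "Q * N R = Q * R" using \<open>N Q * N R = Q * R\<close> QN by simp
      then have RN: "N R = R" using \<open>Q \<noteq> 0\<close> by simp
      have ev: "P = X2 (ev P)" if "N P = P" for P
      proof -
        have "mix (ev P) (- od P) = mix (ev P) (od P)" using that N_mix[of "ev P" "od P"] mix_ev_od[of P] by simp
        then have "- od P = od P" using mix_inj by blast
        then have "od P = 0" by simp
        then show ?thesis using mix_ev_od[of P] by (simp add: mix_X2)
      qed
      have "X2 A = X2 (ev Q * ev R)" using AQR ev[OF QN] ev[OF RN] X2_mult[of "ev Q" "ev R"] by simp
      then have "mix A 0 = mix (ev Q * ev R) 0" by (simp add: mix_X2)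
      then have "A = ev Q * ev R" using mix_inj by blast
      then have "is_unit (ev Q) \<or> is_unit (ev R)" using irrA irreducibleD by blast
      then have "is_unit (X2 (ev Q)) \<or> is_unit (X2 (ev R))" using unit_pcompose unfolding X2_def by blast
      then have "is_unit Q \<or> is_unit R" using ev[OF QN] ev[OF RN] by simp
      then show ?thesis using irrQ irrR irreducible_not_unit by blast
    qed
  next
    assume "N Q dvd R"
    then obtain u where u: "R = N Q * u" by blast
    then have "is_unit u" using irreducibleD[OF irrR u] nQu by blast
    then have "u = 1 \<or> u = -1" by (rule unit_const)
    moreover have "coeff A 0 = 1"
    proof -
      have "\<forall>n. 4 dvd coeff (X2 A - A^2) n" using g1 by (simp add: const_poly_dvd_iff)
      then have "4 dvd coeff A 0 - coeff A 0 * coeff A 0"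
        by (auto dest: spec[of _ 0] simp: coeff0_X2 power2_eq_square coeff_mult_0)
      then show ?thesis using c0 by auto
    qed
    moreover have "u \<noteq> -1"
    proof
      assume "u = -1"
      then have "R = - N Q" using u by simp
      then have "coeff R 0 = - coeff Q 0" using coeff0_N[of Q] by (metis coeff_minus)
      then have "coeff A 0 = - (coeff Q 0 * coeff Q 0)" using cA by simp
      moreover have "coeff Q 0 * coeff Q 0 \<ge> 0" by simp
      ultimately show False using \<open>coeff A 0 = 1\<close> by linarith
    qed
    ultimately have "u = 1" by blast
    then show ?thesis using u by simp
  qed
qed



lemma seq_coeff0:
  assumes "nice P" "splitting_sequence P Ps"
  shows "coeff (Ps n) 0 \<in> {1,-1}"
proof (induction n)
  case 0 then show ?case using assms by (simp add: nice_def splitting_sequence_def)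
next
  case (Suc n)
  show ?case
  proof (cases "irreducible (Ps n)")
    case True
    then have "Ps (Suc n) = X2 (Ps n)" using assms(2) by (simp add: splitting_sequence_def X2_def)
    then show ?thesis using Suc.IH by (simp add: coeff0_X2)
  next
    case False
    then obtain Q R where QR: "Ps n = Q * R" "Ps (Suc n) \<in> {Q, R}"
      using assms(2) unfolding splitting_sequence_def by blast
    have "is_unit (coeff Q 0 * coeff R 0)" using Suc.IH QR(1) by (auto simp: coeff_mult_0)
    then have "is_unit (coeff Q 0) \<and> is_unit (coeff R 0)" by (meson dvd_mult_left dvd_mult_right dvd_trans)
    then have "coeff Q 0 \<in> {1,-1} \<and> coeff R 0 \<in> {1,-1}" by auto
    then show ?thesis using QR(2) by auto
  qed
qed

theorem lemma3p16:
  fixes P :: "int poly" and Ps :: "nat \<Rightarrow> int poly" and i k :: nat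
  assumes "nice P"
    and "splitting_sequence P Ps"
    and "i \<ge> 1"
    and "binary_string Ps (i - 1) = L" and "binary_string Ps i = L"
    and "binary_string Ps (i + 1) = S"
    and "k \<ge> 1"
    and "n_good k (Ps i)" and "n_good k (Ps (i + 2))"
  shows "n_good (k + 1) (Ps i)"
proof -
  define j where "j = i - 1"
  have ij: "i = Suc j" using assms(3) j_def by simp
  have sp: "\<And>n. irreducible (Ps n) \<Longrightarrow> Ps (Suc n) = X2 (Ps n)"
    using assms(2) by (simp add: splitting_sequence_def X2_def)
  have irrB: "irreducible (Ps j)" using assms(4) j_def by (simp add: binary_string_def split: if_splits)
  have irrA: "irreducible (Ps i)" using assms(5) by (simp add: binary_string_def split: if_splits)
  have nirr: "\<not> irreducible (Ps (Suc i))" using assms(6) by (simp add: binary_string_def split: if_splits)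
  have hA: "Ps i = X2 (Ps j)" using sp[OF irrB] ij by simp
  have hA2: "Ps (Suc i) = X2 (Ps i)" using sp[OF irrA] .
  obtain Q R where QR: "irreducible Q" "irreducible R" "Ps (Suc i) = Q * R" "Ps (Suc (Suc i)) \<in> {Q, R}"
    using assms(2) nirr unfolding splitting_sequence_def by blast
  define Q' where "Q' = Ps (i+2)"
  obtain R' where R': "irreducible Q'" "irreducible R'" "X2 (Ps i) = Q' * R'"
    using QR hA2 unfolding Q'_def by (auto simp: mult.commute)
  have g1: "[:4:] dvd X2 (Ps i) - (Ps i)^2"
    using n_goodD[OF assms(8), of 1] assms(7) by (simp add: X2_def monom2)
  have "R' = N Q'"
    by (rule split_case[OF irrA R'(3) R'(1) R'(2) seq_coeff0[OF assms(1,2)] g1])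
  then have AQ: "X2 (Ps i) = Q' * pcompose Q' [:0,-1:]" using R'(3) by (simp add: N_def)
  have gQ: "[:2^(k+1):] dvd X2 Q' - Q'^2"
    using good_char[OF assms(9) assms(7)] unfolding Q'_def .
  have "[:2^(k+2):] dvd X2 (Ps i) - (Ps i)^2"
    by (rule core_alg[OF hA AQ gQ assms(7)])
  then show ?thesis by (rule good_step[OF assms(8)])
qed

end
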